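(* Let $R$ be a commutative Artinian ring, $M$ a non-zero $R$-module, and $M=\sum_{i=1}^n K_i$ a minimal PS-hollow representation of $M$. Suppose that every submodule of $K_i$ is PS-hollow (in $M$) for all $i\in\{1,\dots,n\}$. If $In(K_i)\cap In(K_j)=0$ for all $i\neq j$ in $\{1,\dots,n\}$, then $M=\bigoplus_{i=1}^n K_i$.
   Context: An $R$-submodule $N\leq M$ is PS-hollow iff for every ideal $I\leq R$ and every submodule $L\leq M$: $N\subseteq IM+L$ implies $N\subseteq IM$ or $N\subseteq L$. For PS-hollow $N$: $A_N=\{I\leq R: N\subseteq IM\}$, $H_N$ the set of minimal elements of $A_N$, $In(N)=\bigcap_{I\in H_N}IM$ ($=M$ if $H_N=\emptyset$); $N$ is $H$-PS-hollow iff PS-hollow with $H_N=H$. A minimal PS-hollow representation is $M=\sum_{i=1}^n K_i$ with each $K_i$ $H_i$-PS-hollow, $In(K_1),\dots,In(K_n)$ pairwise incomparable, and $K_j\not\subseteq\sum_{i\neq j}K_i$ for all $j$. *)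

theory Defs
  imports Complex_Main
begin

text \<open>Modules: the ambient R-module M is the whole carrier type 'm, with scalar
multiplication scale satisfying the axioms of the library locale module
(R is the type 'a of class comm_ring_1).\<close>

definition is_ideal :: "'a::comm_ring_1 set \<Rightarrow> bool" where
  "is_ideal I \<longleftrightarrow> 0 \<in> I \<and> (\<forall>x\<in>I. \<forall>y\<in>I. x + y \<in> I) \<and> (\<forall>r. \<forall>x\<in>I. r * x \<in> I)"

definition artinian_ring :: "'a::comm_ring_1 itself \<Rightarrow> bool" where
  "artinian_ring _ \<longleftrightarrow>
     (\<forall>f :: nat \<Rightarrow> 'a set. (\<forall>k. is_ideal (f k)) \<and> (\<forall>k. f (Suc k) \<subseteq> f k)
        \<longrightarrow> (\<exists>N. \<forall>k\<ge>N. f k = f N))"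

definition ideal_mult :: "('a::comm_ring_1 \<Rightarrow> 'm::ab_group_add \<Rightarrow> 'm) \<Rightarrow> 'a set \<Rightarrow> 'm set" where
  "ideal_mult scale I = module.span scale {scale r m | r m. r \<in> I}"

definition set_plus_mod :: "'m::ab_group_add set \<Rightarrow> 'm set \<Rightarrow> 'm set" where
  "set_plus_mod A B = {a + b | a b. a \<in> A \<and> b \<in> B}"

definition PS_hollow :: "('a::comm_ring_1 \<Rightarrow> 'm::ab_group_add \<Rightarrow> 'm) \<Rightarrow> 'm set \<Rightarrow> bool" where
  "PS_hollow scale N \<longleftrightarrow> module.subspace scale N \<and>
     (\<forall>I L. is_ideal I \<longrightarrow> module.subspace scale L \<longrightarrow>
        N \<subseteq> set_plus_mod (ideal_mult scale I) L \<longrightarrow>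
        N \<subseteq> ideal_mult scale I \<or> N \<subseteq> L)"

definition A_set :: "('a::comm_ring_1 \<Rightarrow> 'm::ab_group_add \<Rightarrow> 'm) \<Rightarrow> 'm set \<Rightarrow> 'a set set" where
  "A_set scale N = {I. is_ideal I \<and> N \<subseteq> ideal_mult scale I}"

definition H_set :: "('a::comm_ring_1 \<Rightarrow> 'm::ab_group_add \<Rightarrow> 'm) \<Rightarrow> 'm set \<Rightarrow> 'a set set" where
  "H_set scale N = {I \<in> A_set scale N. \<forall>J \<in> A_set scale N. J \<subseteq> I \<longrightarrow> J = I}"

definition In_sub :: "('a::comm_ring_1 \<Rightarrow> 'm::ab_group_add \<Rightarrow> 'm) \<Rightarrow> 'm set \<Rightarrow> 'm set" where
  "In_sub scale N = (if H_set scale N = {} then UNIV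
                      else (\<Inter>I \<in> H_set scale N. ideal_mult scale I))"

definition H_PS_hollow ::
  "('a::comm_ring_1 \<Rightarrow> 'm::ab_group_add \<Rightarrow> 'm) \<Rightarrow> 'a set set \<Rightarrow> 'm set \<Rightarrow> bool" where
  "H_PS_hollow scale H N \<longleftrightarrow> PS_hollow scale N \<and> H_set scale N = H"

definition min_PS_hollow_rep ::
  "('a::comm_ring_1 \<Rightarrow> 'm::ab_group_add \<Rightarrow> 'm) \<Rightarrow> nat \<Rightarrow> (nat \<Rightarrow> 'm set) \<Rightarrow> bool" where
  "min_PS_hollow_rep scale n K \<longleftrightarrow>
     module.span scale (\<Union>i\<in>{1..n}. K i) = UNIV \<and>
     (\<forall>i\<in>{1..n}. \<exists>H. H_PS_hollow scale H (K i)) \<and>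
     (\<forall>i\<in>{1..n}. \<forall>j\<in>{1..n}. i \<noteq> j \<longrightarrow> \<not> In_sub scale (K i) \<subseteq> In_sub scale (K j)) \<and>
     (\<forall>j\<in>{1..n}. \<not> K j \<subseteq> module.span scale (\<Union>i\<in>{1..n} - {j}. K i))"

definition internal_direct_sum ::
  "('a::comm_ring_1 \<Rightarrow> 'm::ab_group_add \<Rightarrow> 'm) \<Rightarrow> nat \<Rightarrow> (nat \<Rightarrow> 'm set) \<Rightarrow> bool" where
  "internal_direct_sum scale n K \<longleftrightarrow>
     module.span scale (\<Union>i\<in>{1..n}. K i) = UNIV \<and>
     (\<forall>j\<in>{1..n}. K j \<inter> module.span scale (\<Union>i\<in>{1..n} - {j}. K i) = {0})"

end

theory Submission
  imports Defs
begin

lemma PS_sub_In: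
  assumes "module scale" "PS_hollow scale N"
  shows "N \<subseteq> In_sub scale N"
  using assms unfolding In_sub_def H_set_def A_set_def by auto

theorem theorem5p23:
  fixes scale :: "'a::comm_ring_1 \<Rightarrow> 'm::ab_group_add \<Rightarrow> 'm"
    and n :: nat and K :: "nat \<Rightarrow> 'm set"
  assumes "module scale"
    and "artinian_ring TYPE('a)"
    and "\<exists>x::'m. x \<noteq> 0"
    and "min_PS_hollow_rep scale n K"
    and "\<forall>i\<in>{1..n}. \<forall>N. module.subspace scale N \<and> N \<subseteq> K i \<longrightarrow> PS_hollow scale N"
    and "\<forall>i\<in>{1..n}. \<forall>j\<in>{1..n}. i \<noteq> j \<longrightarrow> In_sub scale (K i) \<inter> In_sub scale (K j) = {0}"
  shows "internal_direct_sum scale n K"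
proof -
  interpret module scale by (rule assms(1))
  have hol: "PS_hollow scale (K i)" if "i \<in> {1..n}" for i
    using assms(4) that unfolding min_PS_hollow_rep_def H_PS_hollow_def by blast
  have sub: "subspace (K i)" if "i \<in> {1..n}" for i
    using hol[OF that] unfolding PS_hollow_def by blast
  have key: "\<forall>x. x \<in> K j \<longrightarrow> x \<in> span (\<Union>i\<in>S. K i) \<longrightarrow> x = 0"
    if "finite S" "S \<subseteq> {1..n}" "j \<in> {1..n}" "j \<notin> S" for S j
    using that
  proof (induction S rule: finite_induct)
    case empty
    then show ?case by simp
  next
    case (insert i S)
    show ?case
    proof (intro allI impI)
      fix x assume xK: "x \<in> K j" and xs: "x \<in> span (\<Union>i\<in>insert i S. K i)"
      have i1: "i \<in> {1..n}" and ij: "i \<noteq> j" using insert by auto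
      have spK: "span {x} \<subseteq> K j"
        using xK sub[OF insert(5)] by (simp add: span_minimal)
      have psx: "PS_hollow scale (span {x})"
        using assms(5) insert(5) spK by blast
      have xx: "x \<in> span {x}" by (simp add: span_base)
      have spi: "span (K i) = K i" using sub[OF i1] by simp
      have eq: "span (\<Union>i\<in>insert i S. K i) = {a + b |a b. a \<in> K i \<and> b \<in> span (\<Union>i\<in>S. K i)}"
        by (simp only: UN_insert span_Un spi)
      show "x = 0"
      proof (cases "\<exists>I \<in> H_set scale (K i). \<not> span {x} \<subseteq> ideal_mult scale I")
        case True
        then obtain I where I: "I \<in> H_set scale (K i)" "\<not> span {x} \<subseteq> ideal_mult scale I" by blast
        have Iid: "is_ideal I" and KI: "K i \<subseteq> ideal_mult scale I"
          using I(1) unfolding H_set_def A_set_def by auto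
        have "span (\<Union>i\<in>insert i S. K i) \<subseteq> set_plus_mod (ideal_mult scale I) (span (\<Union>i\<in>S. K i))"
          unfolding eq set_plus_mod_def using KI by blast
        moreover have "span {x} \<subseteq> span (\<Union>i\<in>insert i S. K i)"
          using xs by (simp add: span_minimal)
        ultimately have "span {x} \<subseteq> span (\<Union>i\<in>S. K i)"
          using psx Iid I(2) unfolding PS_hollow_def by blast
        then show ?thesis using insert xK xx by blast
      next
        case False
        then have "x \<in> In_sub scale (K i)"
          using xx unfolding In_sub_def by auto
        moreover have "x \<in> In_sub scale (K j)"
          using PS_sub_In[OF assms(1) hol[OF insert(5)]] xK by blast
        ultimately show ?thesis using assms(6) i1 insert(5) ij by blast
      qed
    qed
  qed
  show ?thesis
    unfolding internal_direct_sum_def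
  proof (intro conjI ballI)
    show "span (\<Union>i\<in>{1..n}. K i) = UNIV" using assms(4) unfolding min_PS_hollow_rep_def by blast
  next
    fix j assume j: "j \<in> {1..n}"
    have "0 \<in> K j" using sub[OF j] by (simp add: subspace_def)
    then show "K j \<inter> span (\<Union>i\<in>{1..n} - {j}. K i) = {0}"
      using key[of "{1..n} - {j}" j] j by (auto simp: span_zero)
  qed
qed

end
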